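(* Fix integers $N\ge 2$ and $K\ge 1$. The class $M^{\text{TransE}}$ is not universal, i.e. $\pi(\mathcal{M}^{\text{TransE}})\ne\pi(\mathbb{R}^{N\times N\times K})$.
   Context: There are $N$ entities and $K$ relations. A score-based model assigns a score $s_k(i,j)\in\mathbb{R}$ to each triple, $i,j\in\{1,\dots,N\}$, $k\in\{1,\dots,K\}$; its scoring tensor $\mathcal{S}\in\mathbb{R}^{N\times N\times K}$ has frontal slices $\mathbf{S}_k$ with $[\mathbf{S}_k]_{ij}=s_k(i,j)$. For a real $N\times N$ matrix $\mathbf{S}$, $\pi(\mathbf{S})$ is the matrix of dense ranks: $\pi_{ij}(\mathbf{S})=1+$ (number of distinct values among entries of $\mathbf{S}$ strictly larger than $s_{ij}$). For tensors, $\pi$ acts slicewise; for a set $X$, $\pi(X)=\{\pi(x):x\in X\}$; thus $\pi(\mathbb{R}^{N\times N\times K})$ is the set of all ranking tensors. TransE of size $r$: parameters $\mathbf{A}\in\mathbb{R}^{N\times r}$ (rows $\mathbf{a}_i$), $\mathbf{R}\in\mathbb{R}^{K\times r}$ (rows $\mathbf{r}_k$), score $-\|\mathbf{a}_i+\mathbf{r}_k-\mathbf{a}_j\|_2^2$. $\mathcal{M}^{\text{TransE}}$ is the set of scoring tensors of all TransE models of all sizes $r\in\mathbb{N}^+$. A class is universal if it can represent every ranking tensor. *)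

theory Defs
  imports Complex_Main
begin

text \<open>A scoring tensor in R^(N x N x K) is represented as a function
  S :: nat => nat => nat => real, with S i j k = [S_k]_ij for
  i, j in {1..N}, k in {1..K}; values outside that range are irrelevant.\<close>

type_synonym score_tensor = "nat \<Rightarrow> nat \<Rightarrow> nat \<Rightarrow> real"
type_synonym rank_tensor = "nat \<Rightarrow> nat \<Rightarrow> nat \<Rightarrow> nat"

definition dense_rank :: "nat \<Rightarrow> nat \<Rightarrow> score_tensor \<Rightarrow> rank_tensor" where
  "dense_rank N K S = (\<lambda>i j k.
     if i \<in> {1..N} \<and> j \<in> {1..N} \<and> k \<in> {1..K} then
       1 + card {v. \<exists>i'\<in>{1..N}. \<exists>j'\<in>{1..N}. v = S i' j' k \<and> v > S i j k}
     else 0)"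

definition transE_tensor ::
  "nat \<Rightarrow> (nat \<Rightarrow> nat \<Rightarrow> real) \<Rightarrow> (nat \<Rightarrow> nat \<Rightarrow> real) \<Rightarrow> score_tensor" where
  "transE_tensor r A R = (\<lambda>i j k. - (\<Sum>l\<in>{1..r}. (A i l + R k l - A j l)\<^sup>2))"

definition M_TransE :: "score_tensor set" where
  "M_TransE = {S. \<exists>r::nat. r \<ge> 1 \<and> (\<exists>A R. S = transE_tensor r A R)}"

end

theory Submission
  imports Defs
begin

theorem corollary2:
  fixes N K :: nat
  assumes "N \<ge> 2" and "K \<ge> 1"
  shows "dense_rank N K ` M_TransE \<noteq> dense_rank N K ` (UNIV :: score_tensor set)"
proof
  assume eq: "dense_rank N K ` M_TransE = dense_rank N K ` (UNIV :: score_tensor set)"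
  define T :: score_tensor where "T = (\<lambda>i j k. if i = 1 \<and> j = 1 then 1 else 0)"
  have r1: "1 \<in> {1..N}" "2 \<in> {1..N}" "1 \<in> {1..K}" using assms by auto
  have s1: "{v. \<exists>i'\<in>{1..N}. \<exists>j'\<in>{1..N}. v = T i' j' 1 \<and> v > T 1 1 1} = {}"
    by (auto simp: T_def)
  have s2: "{v. \<exists>i'\<in>{1..N}. \<exists>j'\<in>{1..N}. v = T i' j' 1 \<and> v > T 2 2 1} = {1}"
    using r1 by (auto simp: T_def)
  have t1: "dense_rank N K T 1 1 1 = 1" using r1 s1 by (simp add: dense_rank_def)
  have t2: "dense_rank N K T 2 2 1 = 2" using r1 s2 by (simp add: dense_rank_def)
  have "dense_rank N K T \<in> dense_rank N K ` M_TransE" using eq by auto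
  then obtain S where S: "S \<in> M_TransE" "dense_rank N K S = dense_rank N K T" by auto
  then obtain r A R where SA: "S = transE_tensor r A R" unfolding M_TransE_def by auto
  have "S 1 1 1 = S 2 2 1" unfolding SA transE_tensor_def by simp
  then have "dense_rank N K S 1 1 1 = dense_rank N K S 2 2 1"
    using r1 by (simp add: dense_rank_def)
  then show False using S(2) t1 t2 by simp
qed

end
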